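(* Let $\Gamma$ be a connected fat-vertex graph associated to a reduced link diagram $D$. Then the Wirtinger number $\omega(\Gamma)$ is bounded above by the number of vertices of the plane dual graph $\Gamma^\ast$.
   Context: A reduced diagram is one without nugatory crossings. Fat-vertex graph: from $D$ and a checkerboard spanning surface $F$ (a union of disks and twisted bands), form the planar graph $\Gamma$ whose vertices are the disks of $F$, drawn as disjoint closed disks ("fat vertices"), and whose edges are the cores of the bands; $\Gamma^\ast$ is its plane dual graph (with one vertex per complementary region of $\Gamma$ in the plane, including the unbounded one). A segment of $\Gamma$ is either an edge or a connected arc of $\partial v\setminus\{\text{endpoints of edges}\}$ for a fat vertex $v$; let $S(\Gamma)$ be the set of segments ($m$ elements) and $e(\Gamma)$ the set of edges. For $A_1\subset A_2\subset S(\Gamma)$ with $A_2\setminus A_1=\{s\}$, a coloring move $A_1\to A_2$ is allowed if either (1) $s$ is an edge and both boundary segments adjacent to $s$ at one of its vertices are in $A_1$, or (2) $s$ is an arc in the boundary of a fat vertex and is incident to an edge in $A_1$. $\Gamma$ is $k$-colorable if there is a $k$-element set $A_0\subset S(\Gamma)\setminus e(\Gamma)$ and a sequence of $m-k$ coloring moves $A_0\to A_1\to\cdots\to A_{m-k}=S(\Gamma)$; the Wirtinger number $\omega(\Gamma)$ is the least such $k$. *)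

theory Defs
  imports Main
begin

text \<open>
  Combinatorial model of a planar fat-vertex graph (rotation system / combinatorial map).
  V: fat vertices; H: darts (edge-ends, i.e. endpoints of band cores on the disk boundaries);
  vert d: fat vertex at which dart d sits; alpha: the other end of the same edge
  (fixed-point-free involution on H); sigma: cyclic order of edge endpoints around the
  boundary circle of each fat vertex (one cycle per vertex having darts).
\<close>

definition fat_graph ::
  "'v set \<Rightarrow> 'd set \<Rightarrow> ('d \<Rightarrow> 'v) \<Rightarrow> ('d \<Rightarrow> 'd) \<Rightarrow> ('d \<Rightarrow> 'd) \<Rightarrow> bool" where
  "fat_graph V H vert alpha sigma \<longleftrightarrow>
     finite V \<and> finite H \<and> V \<noteq> {} \<and>
     (\<forall>d\<in>H. vert d \<in> V) \<and>
     (\<forall>d\<in>H. alpha d \<in> H \<and> alpha d \<noteq> d \<and> alpha (alpha d) = d) \<and>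
     bij_betw sigma H H \<and>
     (\<forall>d\<in>H. vert (sigma d) = vert d) \<and>
     (\<forall>d\<in>H. \<forall>d'\<in>H. vert d = vert d' \<longrightarrow> (\<exists>n. (sigma ^^ n) d = d'))"

definition fg_edges :: "'d set \<Rightarrow> ('d \<Rightarrow> 'd) \<Rightarrow> 'd set set" where
  "fg_edges H alpha = {{d, alpha d} | d. d \<in> H}"

definition fg_connected :: "'v set \<Rightarrow> 'd set \<Rightarrow> ('d \<Rightarrow> 'v) \<Rightarrow> ('d \<Rightarrow> 'd) \<Rightarrow> bool" where
  "fg_connected V H' vert alpha \<longleftrightarrow>
     (\<forall>u\<in>V. \<forall>w\<in>V. (u, w) \<in> {(vert d, vert (alpha d)) | d. d \<in> H'}\<^sup>*)"

text \<open>Faces (complementary regions) = orbits of sigma o alpha; a graph without edges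
  (a single fat vertex, when connected) has exactly one complementary region.\<close>
definition dual_vertices :: "'d set \<Rightarrow> ('d \<Rightarrow> 'd) \<Rightarrow> ('d \<Rightarrow> 'd) \<Rightarrow> 'd set set" where
  "dual_vertices H alpha sigma =
     (if H = {} then {{}} else {{((sigma \<circ> alpha) ^^ n) d | n. True} | d. d \<in> H})"

text \<open>Planarity (genus 0) of a connected rotation system: Euler's formula.\<close>
definition fg_plane :: "'v set \<Rightarrow> 'd set \<Rightarrow> ('d \<Rightarrow> 'd) \<Rightarrow> ('d \<Rightarrow> 'd) \<Rightarrow> bool" where
  "fg_plane V H alpha sigma \<longleftrightarrow>
     int (card V) - int (card (fg_edges H alpha)) + int (card (dual_vertices H alpha sigma)) = 2"

text \<open>Reducedness of D (no nugatory crossings) = no loop and no bridge in Gamma.\<close>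
definition fg_reduced :: "'v set \<Rightarrow> 'd set \<Rightarrow> ('d \<Rightarrow> 'v) \<Rightarrow> ('d \<Rightarrow> 'd) \<Rightarrow> bool" where
  "fg_reduced V H vert alpha \<longleftrightarrow>
     (\<forall>d\<in>H. vert (alpha d) \<noteq> vert d) \<and>
     (\<forall>d\<in>H. fg_connected V (H - {d, alpha d}) vert alpha)"

text \<open>Segments: edges, boundary arcs (Arc d = arc of the boundary circle of vert d from the
  endpoint of d to the endpoint of sigma d), and whole boundary circles of fat vertices
  without edge endpoints.\<close>
datatype ('v, 'd) segment = Edge "'d set" | Arc 'd | Circle 'v

definition segments ::
  "'v set \<Rightarrow> 'd set \<Rightarrow> ('d \<Rightarrow> 'v) \<Rightarrow> ('d \<Rightarrow> 'd) \<Rightarrow> ('v, 'd) segment set" where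
  "segments V H vert alpha =
     Edge ` fg_edges H alpha \<union> Arc ` H \<union> Circle ` {v \<in> V. \<forall>d\<in>H. vert d \<noteq> v}"

definition coloring_move ::
  "'d set \<Rightarrow> ('d \<Rightarrow> 'd) \<Rightarrow> ('d \<Rightarrow> 'd) \<Rightarrow> ('v, 'd) segment set \<Rightarrow> ('v, 'd) segment set \<Rightarrow> bool" where
  "coloring_move H alpha sigma A1 A2 \<longleftrightarrow>
     (\<exists>s. A1 \<subseteq> A2 \<and> A2 - A1 = {s} \<and>
       ((\<exists>d\<in>H. s = Edge {d, alpha d} \<and> Arc d \<in> A1 \<and> (\<exists>d'\<in>H. sigma d' = d \<and> Arc d' \<in> A1)) \<or>
        (\<exists>d\<in>H. s = Arc d \<and> (Edge {d, alpha d} \<in> A1 \<or> Edge {sigma d, alpha (sigma d)} \<in> A1))))"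

definition k_colorable ::
  "'v set \<Rightarrow> 'd set \<Rightarrow> ('d \<Rightarrow> 'v) \<Rightarrow> ('d \<Rightarrow> 'd) \<Rightarrow> ('d \<Rightarrow> 'd) \<Rightarrow> nat \<Rightarrow> bool" where
  "k_colorable V H vert alpha sigma k \<longleftrightarrow>
     (let S = segments V H vert alpha in
      \<exists>A0 f. A0 \<subseteq> S - Edge ` fg_edges H alpha \<and> card A0 = k \<and>
        f 0 = A0 \<and> f (card S - k) = S \<and>
        (\<forall>i < card S - k. coloring_move H alpha sigma (f i) (f (Suc i))))"

definition wirtinger_number ::
  "'v set \<Rightarrow> 'd set \<Rightarrow> ('d \<Rightarrow> 'v) \<Rightarrow> ('d \<Rightarrow> 'd) \<Rightarrow> ('d \<Rightarrow> 'd) \<Rightarrow> nat" where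
  "wirtinger_number V H vert alpha sigma = (LEAST k. k_colorable V H vert alpha sigma k)"

end

theory Submission
  imports Defs
begin

locale fgl =
  fixes V :: "'v set" and H :: "'d set" and vert :: "'d \<Rightarrow> 'v"
    and alpha sigma :: "'d \<Rightarrow> 'd"
  assumes fg: "fat_graph V H vert alpha sigma"
begin

lemma finH: "finite H" using fg unfolding fat_graph_def by auto
lemma finV: "finite V" using fg unfolding fat_graph_def by auto
lemma vertV: "d \<in> H \<Longrightarrow> vert d \<in> V" using fg unfolding fat_graph_def by auto
lemma alH: "d \<in> H \<Longrightarrow> alpha d \<in> H" using fg unfolding fat_graph_def by auto
lemma alne: "d \<in> H \<Longrightarrow> alpha d \<noteq> d" using fg unfolding fat_graph_def by auto
lemma alal: "d \<in> H \<Longrightarrow> alpha (alpha d) = d" using fg unfolding fat_graph_def by auto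
lemma sbij: "bij_betw sigma H H" using fg unfolding fat_graph_def by auto
lemma sH: "d \<in> H \<Longrightarrow> sigma d \<in> H" using sbij bij_betwE by blast
lemma sinj: "inj_on sigma H" using sbij bij_betw_def by blast
lemma svert: "d \<in> H \<Longrightarrow> vert (sigma d) = vert d" using fg unfolding fat_graph_def by auto
lemma orb: "d \<in> H \<Longrightarrow> d' \<in> H \<Longrightarrow> vert d = vert d' \<Longrightarrow> \<exists>n. (sigma ^^ n) d = d'"
  using fg unfolding fat_graph_def by auto

lemma itH: "c \<in> H \<Longrightarrow> (sigma ^^ n) c \<in> H"
  by (induction n) (auto simp: sH)
lemma itvert: "c \<in> H \<Longrightarrow> vert ((sigma ^^ n) c) = vert c"
  by (induction n) (auto simp: svert itH)
lemma itinj: "c1 \<in> H \<Longrightarrow> c2 \<in> H \<Longrightarrow> (sigma ^^ n) c1 = (sigma ^^ n) c2 \<Longrightarrow> c1 = c2"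
proof (induction n)
  case 0 then show ?case by simp
next
  case (Suc n)
  then show ?case using sinj itH by (auto dest: inj_onD)
qed
lemma itadd: "(sigma ^^ (m + n)) c = (sigma ^^ m) ((sigma ^^ n) c)"
  by (simp add: funpow_add)

lemma orbpos: "c \<in> H \<Longrightarrow> d \<in> H \<Longrightarrow> vert d = vert c \<Longrightarrow> \<exists>n>0. (sigma ^^ n) c = d"
proof -
  assume a: "c \<in> H" "d \<in> H" "vert d = vert c"
  then obtain n where "(sigma ^^ n) (sigma c) = d" using orb[of "sigma c" d] sH svert by auto
  then have "(sigma ^^ Suc n) c = d" by (metis comp_apply funpow_Suc_right)
  then show ?thesis by blast
qed

definition nexp :: "'d set \<Rightarrow> 'd \<Rightarrow> nat" where
  "nexp D c = (LEAST n. 0 < n \<and> (sigma ^^ n) c \<in> D)"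
definition nxt :: "'d set \<Rightarrow> 'd \<Rightarrow> 'd" where
  "nxt D c = (sigma ^^ nexp D c) c"

definition hasd :: "'d set \<Rightarrow> 'd \<Rightarrow> bool" where
  "hasd D c \<longleftrightarrow> (\<exists>d\<in>D. vert d = vert c)"

lemma nexp_ex: "D \<subseteq> H \<Longrightarrow> c \<in> H \<Longrightarrow> hasd D c \<Longrightarrow> \<exists>n. 0 < n \<and> (sigma ^^ n) c \<in> D"
  unfolding hasd_def using orbpos by blast

lemma nexp_pos: "D \<subseteq> H \<Longrightarrow> c \<in> H \<Longrightarrow> hasd D c \<Longrightarrow> 0 < nexp D c"
  unfolding nexp_def using nexp_ex LeastI_ex[of "\<lambda>n. 0 < n \<and> (sigma ^^ n) c \<in> D"] by blast
lemma nxt_in: "D \<subseteq> H \<Longrightarrow> c \<in> H \<Longrightarrow> hasd D c \<Longrightarrow> nxt D c \<in> D"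
  unfolding nxt_def nexp_def using nexp_ex LeastI_ex[of "\<lambda>n. 0 < n \<and> (sigma ^^ n) c \<in> D"] by blast
lemma nexp_min: "0 < m \<Longrightarrow> m < nexp D c \<Longrightarrow> (sigma ^^ m) c \<notin> D"
  unfolding nexp_def using not_less_Least by blast
lemma nexp_le: "0 < m \<Longrightarrow> (sigma ^^ m) c \<in> D \<Longrightarrow> nexp D c \<le> m"
  using nexp_min not_less by blast
lemma nxt_vert: "c \<in> H \<Longrightarrow> vert (nxt D c) = vert c"
  unfolding nxt_def by (simp add: itvert)
lemma nxt_H: "c \<in> H \<Longrightarrow> nxt D c \<in> H"
  unfolding nxt_def by (simp add: itH)

lemma hasd_self: "c \<in> D \<Longrightarrow> hasd D c" unfolding hasd_def by blast

lemma nxt_inj: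
  assumes D: "D \<subseteq> H" and c: "c1 \<in> D" "c2 \<in> D" and e: "nxt D c1 = nxt D c2"
  shows "c1 = c2"
proof -
  have gen: "a = b" if "a \<in> D" "b \<in> D" "nxt D a = nxt D b" "nexp D a \<le> nexp D b"
     for a b
  proof -
    let ?k = "nexp D b - nexp D a"
    have "(sigma ^^ nexp D a) a = (sigma ^^ nexp D a) ((sigma ^^ ?k) b)"
      using that(3,4) unfolding nxt_def by (simp add: itadd[symmetric])
    then have ab: "a = (sigma ^^ ?k) b" using itinj that D itH by blast
    show ?thesis
    proof (cases "?k = 0")
      case True
      then show "a = b" using ab by simp
    next
      case False
      have "?k < nexp D b" using nexp_pos[of D a] that D hasd_self by auto
      then have "(sigma ^^ ?k) b \<notin> D" using nexp_min False by blast
      then show ?thesis using ab that(1) by simp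
    qed
  qed
  show ?thesis
  proof (cases "nexp D c1 \<le> nexp D c2")
    case True then show ?thesis using gen[of c1 c2] c e by blast
  next
    case False
    then have "nexp D c2 \<le> nexp D c1" by simp
    then have "c2 = c1" using gen[of c2 c1] c e by simp
    then show ?thesis by simp
  qed
qed

lemma nxt_surj: "D \<subseteq> H \<Longrightarrow> d \<in> D \<Longrightarrow> \<exists>q\<in>D. nxt D q = d"
proof -
  assume D: "D \<subseteq> H" and d: "d \<in> D"
  have "finite D" using D finH finite_subset by blast
  moreover have "nxt D ` D \<subseteq> D" using nxt_in D hasd_self by blast
  moreover have "inj_on (nxt D) D" using nxt_inj D by (meson inj_onI)
  ultimately have "nxt D ` D = D" by (rule endo_inj_surj)
  then show ?thesis using d by force
qed

lemma N2:
  assumes DD: "D \<subseteq> D'" "D' \<subseteq> H" and c: "c \<in> H" "hasd D c" and nd: "nxt D' c \<notin> D"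
  shows "nxt D c = nxt D (nxt D' c)" "nexp D c = nexp D' c + nexp D (nxt D' c)"
proof -
  let ?n = "nexp D c" and ?n' = "nexp D' c" and ?c' = "nxt D' c"
  have hD': "hasd D' c" using c DD unfolding hasd_def by blast
  have Hn: "(sigma ^^ ?n) c \<in> D" using nxt_in[of D c] DD c unfolding nxt_def by auto
  have n0: "0 < ?n" using nexp_pos DD c by auto
  have "?n' \<le> ?n" using nexp_le[OF n0, of c D'] Hn DD by auto
  moreover have "?n' \<noteq> ?n" using nd Hn unfolding nxt_def by auto
  ultimately have lt: "?n' < ?n" by simp
  have c'H: "?c' \<in> H" using nxt_H c by blast
  have hc': "hasd D ?c'" using c nxt_vert[of c D'] unfolding hasd_def by auto
  let ?m = "nexp D ?c'"
  have m0: "0 < ?m" using nexp_pos DD c'H hc' by auto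
  have "(sigma ^^ (?m + ?n')) c \<in> D" using nxt_in[of D ?c'] DD c'H hc'
    unfolding nxt_def by (simp add: itadd)
  then have le1: "?n \<le> ?m + ?n'" using nexp_le m0 by auto
  have "(sigma ^^ (?n - ?n')) ?c' = (sigma ^^ ?n) c" unfolding nxt_def
    using lt by (simp add: itadd[symmetric])
  then have "(sigma ^^ (?n - ?n')) ?c' \<in> D" using Hn by simp
  then have le2: "?m \<le> ?n - ?n'" using nexp_le lt by auto
  have eq: "?n = ?n' + ?m" using le1 le2 lt by linarith
  show "?n = ?n' + ?m" by (rule eq)
  have eq2: "?n = ?m + ?n'" using eq by simp
  show "nxt D c = nxt D ?c'" unfolding nxt_def[of D c] nxt_def[of D ?c'] eq2 itadd
    by (simp add: nxt_def)
qed

lemma N2b: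
  assumes DD: "D \<subseteq> D'" "D' \<subseteq> H" and c: "c \<in> H" and nd: "nxt D' c \<in> D"
  shows "nxt D c = nxt D' c"
proof -
  have "hasd D c" using nd nxt_vert[OF c] unfolding hasd_def by auto
  then have n0: "0 < nexp D c" and Hn: "(sigma ^^ nexp D c) c \<in> D"
    using nexp_pos nxt_in DD c unfolding nxt_def by auto
  have hD': "hasd D' c" using \<open>hasd D c\<close> DD unfolding hasd_def by blast
  have n'0: "0 < nexp D' c" using nexp_pos DD c hD' by auto
  have "nexp D' c \<le> nexp D c" using nexp_le[OF n0] Hn DD by auto
  moreover have "nexp D c \<le> nexp D' c" using nexp_le[OF n'0] nd unfolding nxt_def by auto
  ultimately show ?thesis unfolding nxt_def by simp
qed

lemma NX:
  assumes DD: "D \<subseteq> D'" "D' \<subseteq> H" and c: "c \<in> H" "hasd D c" and nd: "nxt D' c \<notin> D"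
  shows "nexp D (nxt D' c) < nexp D c"
proof -
  have "hasd D' c" using c DD unfolding hasd_def by blast
  then have "0 < nexp D' c" using nexp_pos DD c by auto
  then show ?thesis using N2(2)[OF assms] by simp
qed

lemma two_darts:
  assumes D: "D \<subseteq> H" and uv: "u \<in> D" "v \<in> D" "u \<noteq> v" "vert u = vert v"
    and only: "\<forall>w\<in>D. vert w = vert u \<longrightarrow> w = u \<or> w = v"
  shows "nxt D u = v"
proof -
  have uH: "u \<in> H" "v \<in> H" using D uv by auto
  have i: "nxt D u \<in> D" "vert (nxt D u) = vert u" using nxt_in nxt_vert D uH hasd_self uv by auto
  show ?thesis
  proof (rule ccontr)
    assume "nxt D u \<noteq> v"
    then have fx: "(sigma ^^ nexp D u) u = u" using only i unfolding nxt_def by auto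
    let ?n = "nexp D u"
    have n0: "0 < ?n" using nexp_pos D uH hasd_self uv by auto
    have per: "(sigma ^^ (q * ?n)) u = u" for q
      by (induction q) (auto simp: itadd fx)
    obtain m where m: "(sigma ^^ m) u = v" using orb uH uv by blast
    have "m = m mod ?n + (m div ?n) * ?n" by simp
    then have "(sigma ^^ m) u = (sigma ^^ (m mod ?n)) u"
      by (metis itadd per)
    then have r: "(sigma ^^ (m mod ?n)) u = v" using m by simp
    have "m mod ?n \<noteq> 0"
    proof
      assume "m mod ?n = 0"
      then have "v = u" using r by simp
      then show False using uv(3) by simp
    qed
    then have pos: "0 < m mod ?n" by simp
    have "m mod ?n < ?n" using n0 by simp
    then have "(sigma ^^ (m mod ?n)) u \<notin> D" using nexp_min[OF pos] by blast
    then show False using r uv by simp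
  qed
qed

lemma nxt_HH: "c \<in> H \<Longrightarrow> nxt H c = sigma c"
proof -
  assume c: "c \<in> H"
  have "nexp H c = 1" unfolding nexp_def
    by (rule Least_equality) (auto simp: c sH)
  then show ?thesis unfolding nxt_def by simp
qed

end

context fgl
begin

definition ed :: "'d \<Rightarrow> ('v, 'd) segment" where "ed d = Edge {d, alpha d}"

lemma ed_al: "d \<in> H \<Longrightarrow> ed (alpha d) = ed d"
  unfolding ed_def by (simp add: alal insert_commute)

inductive_set clo :: "'d set \<Rightarrow> ('d \<Rightarrow> 'd) \<Rightarrow> 'd set \<Rightarrow> ('v, 'd) segment set"
  for D sg S where
  cs: "c \<in> S \<Longrightarrow> Arc c \<in> clo D sg S"
| ce: "d \<in> D \<Longrightarrow> Arc d \<in> clo D sg S \<Longrightarrow> d' \<in> D \<Longrightarrow> sg d' = d \<Longrightarrow> Arc d' \<in> clo D sg S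
       \<Longrightarrow> ed d \<in> clo D sg S"
| ca: "d \<in> D \<Longrightarrow> ed d \<in> clo D sg S \<or> ed (sg d) \<in> clo D sg S \<Longrightarrow> Arc d \<in> clo D sg S"

lemma clo_mono: assumes "S \<subseteq> S'" "x \<in> clo D sg S" shows "x \<in> clo D sg S'"
  using assms(2)
proof (induction rule: clo.induct)
  case (cs c) then show ?case using assms(1) by (auto intro: clo.cs)
next
  case (ce d d') then show ?case by (auto intro: clo.ce)
next
  case (ca d) then show ?case by (auto intro: clo.ca)
qed

lemma clo_cong1: assumes "\<forall>d\<in>D. sg1 d = sg2 d" "x \<in> clo D sg1 S" shows "x \<in> clo D sg2 S"
  using assms(2)
proof (induction rule: clo.induct)
  case (cs c) then show ?case by (auto intro: clo.cs)
next
  case (ce d d') then show ?case using assms(1) by (metis clo.ce)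
next
  case (ca d) then show ?case using assms(1) by (metis clo.ca)
qed

definition good :: "'d set \<Rightarrow> 'd set \<Rightarrow> bool" where
  "good D S \<longleftrightarrow> D \<subseteq> H \<and> D \<noteq> {} \<and> (\<forall>d\<in>D. alpha d \<in> D) \<and> S \<subseteq> D \<and>
     (\<forall>d\<in>D. ed d \<in> clo D (nxt D) S) \<and> 2 * card S + 2 * card (vert ` D) \<le> card D + 4"

definition is_ear :: "'d set \<Rightarrow> 'v set \<Rightarrow> (nat \<Rightarrow> 'd) \<Rightarrow> nat \<Rightarrow> bool" where
  "is_ear D T c t \<longleftrightarrow>
     (\<forall>i\<le>t. c i \<in> H \<and> c i \<notin> D \<and> alpha (c i) \<notin> D) \<and>
     (\<forall>i\<le>t. \<forall>j\<le>t. (c i = c j \<longrightarrow> i = j) \<and> c i \<noteq> alpha (c j)) \<and>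
     vert (c 0) \<in> T \<and> vert (alpha (c t)) \<in> T \<and>
     (\<forall>i<t. vert (alpha (c i)) = vert (c (Suc i)) \<and> vert (c (Suc i)) \<notin> T) \<and>
     (\<forall>i<t. \<forall>j<t. vert (c (Suc i)) = vert (c (Suc j)) \<longrightarrow> i = j)"

definition edarts :: "(nat \<Rightarrow> 'd) \<Rightarrow> nat \<Rightarrow> 'd set" where
  "edarts c t = c ` {..t} \<union> alpha ` c ` {..t}"

lemma EP_H: "is_ear D T c t \<Longrightarrow> edarts c t \<subseteq> H"
  unfolding is_ear_def edarts_def using alH by auto

lemma EP_D: "is_ear D T c t \<Longrightarrow> edarts c t \<inter> D = {}"
  unfolding is_ear_def edarts_def by auto

lemma EP_al: "is_ear D T c t \<Longrightarrow> w \<in> edarts c t \<Longrightarrow> alpha w \<in> edarts c t"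
  unfolding is_ear_def edarts_def using alal by auto

lemma EP_T: "is_ear D T c t \<Longrightarrow> w \<in> edarts c t \<Longrightarrow> vert w \<in> T \<Longrightarrow> w = c 0 \<or> w = alpha (c t)"
proof -
  assume e: "is_ear D T c t" and w: "w \<in> edarts c t" and v: "vert w \<in> T"
  from w obtain i where i: "i \<le> t" "w = c i \<or> w = alpha (c i)" unfolding edarts_def by auto
  show ?thesis
  proof (cases "w = c i")
    case True
    show ?thesis
    proof (cases i)
      case 0 then show ?thesis using True by simp
    next
      case (Suc k)
      then have "k < t" using i by simp
      then have "vert (c (Suc k)) \<notin> T" using e unfolding is_ear_def by blast
      then show ?thesis using True Suc v by simp
    qed
  next
    case False
    then have w2: "w = alpha (c i)" using i by simp
    show ?thesis
    proof (cases "i = t")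
      case True then show ?thesis using w2 by simp
    next
      case False
      then have "i < t" using i by simp
      then have "vert (alpha (c i)) \<notin> T" using e unfolding is_ear_def by metis
      then show ?thesis using w2 v by simp
    qed
  qed
qed

lemma EP_int: "is_ear D T c t \<Longrightarrow> i < t \<Longrightarrow> w \<in> edarts c t \<Longrightarrow> vert w = vert (c (Suc i))
   \<Longrightarrow> w = alpha (c i) \<or> w = c (Suc i)"
proof -
  assume e: "is_ear D T c t" and it: "i < t" and w: "w \<in> edarts c t" and v: "vert w = vert (c (Suc i))"
  have nT: "vert (c (Suc i)) \<notin> T" using e it unfolding is_ear_def by blast
  from w obtain j where j: "j \<le> t" "w = c j \<or> w = alpha (c j)" unfolding edarts_def by auto
  show ?thesis
  proof (cases "w = c j")
    case True
    show ?thesis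
    proof (cases j)
      case 0 then show ?thesis using True v nT e unfolding is_ear_def by auto
    next
      case (Suc k)
      then have "k < t" using j by simp
      then have "k = i" using e it v True Suc unfolding is_ear_def by blast
      then show ?thesis using True Suc by simp
    qed
  next
    case False
    then have w2: "w = alpha (c j)" using j by simp
    show ?thesis
    proof (cases "j = t")
      case True then show ?thesis using w2 v nT e unfolding is_ear_def by auto
    next
      case False
      then have jt: "j < t" using j by simp
      then have "vert (alpha (c j)) = vert (c (Suc j))" using e unfolding is_ear_def by blast
      then have "j = i" using e it v w2 jt unfolding is_ear_def by metis
      then show ?thesis using w2 by simp
    qed
  qed
qed

lemma EP_ed: "is_ear D T c t \<Longrightarrow> w \<in> edarts c t \<Longrightarrow> \<exists>i\<le>t. ed w = ed (c i)"
  unfolding edarts_def is_ear_def using ed_al by auto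

lemma EP_card: "is_ear D T c t \<Longrightarrow> card (edarts c t) = 2 * (t + 1)"
proof -
  assume e: "is_ear D T c t"
  have i1: "inj_on c {..t}" using e unfolding is_ear_def by (auto intro: inj_onI)
  have i2: "inj_on (alpha \<circ> c) {..t}"
  proof (rule inj_onI)
    fix i j assume "i \<in> {..t}" "j \<in> {..t}" "(alpha \<circ> c) i = (alpha \<circ> c) j"
    then have "c i = c j" using e alal unfolding is_ear_def by (metis atMost_iff comp_apply)
    then show "i = j" using e \<open>i \<in> {..t}\<close> \<open>j \<in> {..t}\<close> unfolding is_ear_def by auto
  qed
  have c1: "card (c ` {..t}) = t + 1" using card_image[OF i1] by simp
  have c2: "card (alpha ` c ` {..t}) = t + 1" using card_image[OF i2] by (simp add: image_comp)
  have dj: "c ` {..t} \<inter> alpha ` c ` {..t} = {}" using e unfolding is_ear_def by auto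
  show ?thesis unfolding edarts_def using card_Un_disjoint[OF _ _ dj] c1 c2 by simp
qed

lemma EP_vert: "is_ear D T c t \<Longrightarrow> vert ` edarts c t \<subseteq> T \<union> (\<lambda>i. vert (c (Suc i))) ` {..<t}"
proof
  fix x assume e: "is_ear D T c t" and x: "x \<in> vert ` edarts c t"
  then obtain w where w: "w \<in> edarts c t" "x = vert w" by auto
  then obtain j where j: "j \<le> t" "w = c j \<or> w = alpha (c j)" unfolding edarts_def by auto
  show "x \<in> T \<union> (\<lambda>i. vert (c (Suc i))) ` {..<t}"
  proof (cases "w = c j")
    case True
    then show ?thesis using e w j unfolding is_ear_def
      by (cases j) auto
  next
    case False
    then have w2: "w = alpha (c j)" using j by simp
    show ?thesis
    proof (cases "j = t")
      case True then show ?thesis using e w w2 unfolding is_ear_def by auto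
    next
      case False then have "j < t" using j by simp
      then show ?thesis using e w w2 unfolding is_ear_def by auto
    qed
  qed
qed

lemma card_le_plus: "finite T \<Longrightarrow> card (T \<union> f ` {..<t}) \<le> card T + t"
  by (metis card_Un_le card_image_le card_lessThan add_le_mono le_trans order_refl finite_lessThan)

lemma ear_prop:
  assumes D': "D' \<subseteq> H" and PD: "edarts c t \<subseteq> D'" and e: "is_ear D T c t"
    and int: "\<forall>i<t. \<forall>w\<in>D'. vert w = vert (c (Suc i)) \<longrightarrow> w = alpha (c i) \<or> w = c (Suc i)"
    and one: "i0 \<le> t" "ed (c i0) \<in> clo D' (nxt D') S'"
  shows "\<forall>j\<le>t. ed (c j) \<in> clo D' (nxt D') S'"
proof -
  let ?W = "clo D' (nxt D') S'"
  have st: "ed (c i) \<in> ?W \<longleftrightarrow> ed (c (Suc i)) \<in> ?W" if it: "i < t" for i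
  proof -
    let ?u = "alpha (c i)" and ?v = "c (Suc i)"
    have uD: "?u \<in> D'" "?v \<in> D'" using PD it unfolding edarts_def by auto
    have uv: "?u \<noteq> ?v" using e it unfolding is_ear_def by (metis Suc_leI less_imp_le_nat)
    have vv: "vert ?u = vert ?v" using e it unfolding is_ear_def by blast
    have uH: "c i \<in> H" using e it unfolding is_ear_def by simp
    have n1: "nxt D' ?u = ?v"
      using two_darts[OF D' uD uv vv] int it vv by auto
    have n2: "nxt D' ?v = ?u"
      using two_darts[OF D' uD(2) uD(1) uv[symmetric] vv[symmetric]] int it by auto
    have eu: "ed ?u = ed (c i)" using ed_al uH by simp
    show ?thesis
    proof
      assume a: "ed (c i) \<in> ?W"
      have A1: "Arc ?u \<in> ?W" using clo.ca[of ?u D'] uD a eu by auto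
      have A2: "Arc ?v \<in> ?W" using clo.ca[of ?v D'] uD a eu n2 by auto
      show "ed ?v \<in> ?W" using clo.ce[OF uD(2) A2 uD(1) n1 A1] .
    next
      assume a: "ed ?v \<in> ?W"
      have A2: "Arc ?v \<in> ?W" using clo.ca[of ?v D'] uD a by auto
      have A1: "Arc ?u \<in> ?W" using clo.ca[of ?u D'] uD a n1 by auto
      have "ed ?u \<in> ?W" using clo.ce[OF uD(1) A1 uD(2) n2 A2] .
      then show "ed (c i) \<in> ?W" using eu by simp
    qed
  qed
  have all0: "\<forall>j\<le>t. ed (c j) \<in> ?W \<longleftrightarrow> ed (c 0) \<in> ?W"
  proof (intro allI impI)
    fix j assume "j \<le> t"
    then show "ed (c j) \<in> ?W \<longleftrightarrow> ed (c 0) \<in> ?W"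
    proof (induction j)
      case 0 then show ?case by simp
    next
      case (Suc j) then show ?case using st[of j] by simp
    qed
  qed
  then show ?thesis using one by blast
qed

end

context fgl
begin

lemma base_good:
  assumes e: "is_ear {} {x0} c t"
  shows "good (edarts c t) {c 0, alpha (c t)}"
proof -
  let ?P = "edarts c t"
  have PH: "?P \<subseteq> H" using EP_H[OF e] .
  have c0: "c 0 \<in> ?P" "alpha (c t) \<in> ?P" unfolding edarts_def by auto
  have ne: "c 0 \<noteq> alpha (c t)" using e unfolding is_ear_def by auto
  have vv: "vert (alpha (c t)) = vert (c 0)" using e unfolding is_ear_def by auto
  have only: "\<forall>w\<in>?P. vert w = vert (alpha (c t)) \<longrightarrow> w = alpha (c t) \<or> w = c 0"
    using EP_T[OF e] e unfolding is_ear_def by auto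
  have n: "nxt ?P (alpha (c t)) = c 0"
    using two_darts[OF PH c0(2) c0(1) ne[symmetric] vv] only by blast
  let ?W = "clo ?P (nxt ?P) {c 0, alpha (c t)}"
  have A1: "Arc (c 0) \<in> ?W" by (rule clo.cs) simp
  have A2: "Arc (alpha (c t)) \<in> ?W" by (rule clo.cs) simp
  have "ed (c 0) \<in> ?W"
    using clo.ce[OF c0(1) A1 c0(2) n A2] .
  moreover have int: "\<forall>i<t. \<forall>w\<in>?P. vert w = vert (c (Suc i)) \<longrightarrow> w = alpha (c i) \<or> w = c (Suc i)"
    using EP_int[OF e] by blast
  ultimately have all: "\<forall>j\<le>t. ed (c j) \<in> ?W"
    using ear_prop[OF PH order_refl e int, of 0] by auto
  have edall: "\<forall>d\<in>?P. ed d \<in> ?W" using all EP_ed[OF e] by metis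
  have cP: "card ?P = 2 * (t + 1)" using EP_card[OF e] .
  have fin: "finite ({x0} \<union> (\<lambda>i. vert (c (Suc i))) ` {..<t})" by simp
  have "card (vert ` ?P) \<le> card ({x0} \<union> (\<lambda>i. vert (c (Suc i))) ` {..<t})"
    using card_mono[OF fin EP_vert[OF e]] .
  also have "\<dots> \<le> card {x0} + t" using card_le_plus[of "{x0}" "\<lambda>i. vert (c (Suc i))" t] by simp
  finally have cV: "card (vert ` ?P) \<le> 1 + t" by simp
  have cS: "card {c 0, alpha (c t)} \<le> 2" by (simp add: card_insert_if)
  show ?thesis unfolding good_def
    using PH c0 EP_al[OF e] edall cP cV cS by auto
qed

lemma ear_step:
  assumes g: "good D S" and e: "is_ear D (vert ` D) c t"
  shows "\<exists>S'. good (D \<union> edarts c t) S'"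
proof -
  define P where "P = edarts c t"
  define D' where "D' = D \<union> P"
  have DH: "D \<subseteq> H" and Dne: "D \<noteq> {}" and Dal: "\<forall>d\<in>D. alpha d \<in> D" and SD: "S \<subseteq> D"
    and Dall: "\<forall>d\<in>D. ed d \<in> clo D (nxt D) S"
    and cnt: "2 * card S + 2 * card (vert ` D) \<le> card D + 4"
    using g unfolding good_def by auto
  have PH: "P \<subseteq> H" unfolding P_def using EP_H[OF e] .
  have PD: "P \<inter> D = {}" unfolding P_def using EP_D[OF e] .
  have D'H: "D' \<subseteq> H" unfolding D'_def using DH PH by auto
  have DD': "D \<subseteq> D'" unfolding D'_def by auto
  have PD': "P \<subseteq> D'" unfolding D'_def by auto
  have PT: "\<And>w. w \<in> P \<Longrightarrow> vert w \<in> vert ` D \<Longrightarrow> w = c 0 \<or> w = alpha (c t)"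
    using EP_T[OF e] unfolding P_def by blast
  have c0P: "c 0 \<in> P" "alpha (c t) \<in> P" unfolding P_def edarts_def by auto
  have c0v: "vert (c 0) \<in> vert ` D" using e unfolding is_ear_def by blast
  have int: "\<forall>i<t. \<forall>w\<in>D'. vert w = vert (c (Suc i)) \<longrightarrow> w = alpha (c i) \<or> w = c (Suc i)"
  proof (intro allI impI ballI)
    fix i w assume it: "i < t" and w: "w \<in> D'" and v: "vert w = vert (c (Suc i))"
    have nv: "vert (c (Suc i)) \<notin> vert ` D" using e it unfolding is_ear_def by blast
    have "w \<notin> D"
    proof
      assume "w \<in> D"
      then have "vert w \<in> vert ` D" by blast
      then show False using v nv by simp
    qed
    then have "w \<in> P" using w unfolding D'_def by auto
    then show "w = alpha (c i) \<or> w = c (Suc i)" using EP_int[OF e it] v unfolding P_def by blast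
  qed
  let ?nx = "nxt D" and ?nx' = "nxt D'"
  have inD': "\<And>w. w \<in> D' \<Longrightarrow> ?nx' w \<in> D'" using nxt_in D'H hasd_self by blast
  have wH: "\<And>w. w \<in> D' \<Longrightarrow> w \<in> H" using D'H by blast
  have vnx: "\<And>w. w \<in> D' \<Longrightarrow> vert (?nx' w) = vert w" using nxt_vert D'H by blast
  have hx: "\<And>w. w \<in> D' \<Longrightarrow> vert w \<in> vert ` D \<Longrightarrow> hasd D w" unfolding hasd_def by force
  have nP: "\<And>w. w \<in> D' \<Longrightarrow> w \<notin> D \<Longrightarrow> w \<in> P" unfolding D'_def by blast
  have G: "?nx' (?nx' (?nx' d)) \<in> D" if d: "d \<in> D" "?nx' d \<notin> D" "?nx' (?nx' d) \<notin> D" for d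
  proof (rule ccontr)
    assume g3: "?nx' (?nx' (?nx' d)) \<notin> D"
    define g1 where "g1 = ?nx' d"
    define g2 where "g2 = ?nx' g1"
    define g3 where "g3 = ?nx' g2"
    have dD': "d \<in> D'" using d DD' by blast
    have m: "g1 \<in> D'" "g2 \<in> D'" "g3 \<in> D'" unfolding g1_def g2_def g3_def using inD' dD' by auto
    have vx: "vert g1 = vert d" "vert g2 = vert d" "vert g3 = vert d"
      unfolding g3_def g2_def g1_def using vnx dD' inD' by auto
    have vD: "vert d \<in> vert ` D" using d by blast
    have n1: "nexp D g1 < nexp D d" unfolding g1_def
      using NX[OF DD' D'H wH[OF dD'] hasd_self[OF d(1)]] d by blast
    have n2: "nexp D g2 < nexp D g1" unfolding g2_def
      using NX[OF DD' D'H wH[OF m(1)] hx[OF m(1)]] vx vD d g1_def by auto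
    have n3: "nexp D g3 < nexp D g2" unfolding g3_def
      using NX[OF DD' D'H wH[OF m(2)] hx[OF m(2)]] vx vD d g1_def g2_def g3 by auto
    have "g1 \<in> P" "g2 \<in> P" "g3 \<in> P" using nP m d g3 g1_def g2_def g3_def by auto
    then have "g1 = c 0 \<or> g1 = alpha (c t)" "g2 = c 0 \<or> g2 = alpha (c t)" "g3 = c 0 \<or> g3 = alpha (c t)"
      using PT vx vD by auto
    then show False using n1 n2 n3 by auto
  qed
  define pre where "pre d = (if ?nx' d \<in> D then d else if ?nx' (?nx' d) \<in> D then ?nx' d else ?nx' (?nx' d))" for d
  have pre: "pre d \<in> D' \<and> ?nx' (pre d) = ?nx d" if d: "d \<in> D" for d
  proof -
    have dD': "d \<in> D'" using d DD' by blast
    have dH: "d \<in> H" using d DH by blast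
    show ?thesis
    proof (cases "?nx' d \<in> D")
      case True
      then show ?thesis unfolding pre_def using N2b[OF DD' D'H dH] dD' by simp
    next
      case F1: False
      have g1: "?nx' d \<in> D'" using inD' dD' by blast
      have e1: "?nx d = ?nx (?nx' d)" using N2(1)[OF DD' D'H dH hasd_self[OF d] F1] .
      have h1: "hasd D (?nx' d)" using hx[OF g1] vnx[OF dD'] d by auto
      show ?thesis
      proof (cases "?nx' (?nx' d) \<in> D")
        case True
        then show ?thesis unfolding pre_def using F1 e1 N2b[OF DD' D'H wH[OF g1]] g1 by simp
      next
        case F2: False
        have g2: "?nx' (?nx' d) \<in> D'" using inD' g1 by blast
        have e2: "?nx (?nx' d) = ?nx (?nx' (?nx' d))"
          using N2(1)[OF DD' D'H wH[OF g1] h1 F2] .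
        have e3: "?nx (?nx' (?nx' d)) = ?nx' (?nx' (?nx' d))"
          using N2b[OF DD' D'H wH[OF g2]] G[OF d F1 F2] by simp
        show ?thesis unfolding pre_def using F1 F2 e1 e2 e3 g2 by simp
      qed
    qed
  qed
  define AC :: "('v, 'd) segment set \<Rightarrow> 'd \<Rightarrow> bool" where "AC W d \<longleftrightarrow> Arc d \<in> W \<and> (?nx' d \<notin> D \<longrightarrow> Arc (?nx' d) \<in> W \<and>
      (?nx' (?nx' d) \<notin> D \<longrightarrow> Arc (?nx' (?nx' d)) \<in> W))" for W d
  have preA: "Arc (pre d) \<in> W" if "AC W d" for W d
    using that unfolding AC_def pre_def by auto
  have PC: "\<forall>d\<in>D. ed d \<in> clo D' ?nx' T'"
    if T': "S \<subseteq> T'"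
      and s: "\<forall>d\<in>S. AC (clo D' ?nx' T') d"
      and a: "\<forall>d\<in>D. (ed d \<in> clo D' ?nx' T' \<or> ed (?nx d) \<in> clo D' ?nx' T') \<longrightarrow> ?nx' d \<notin> D
               \<longrightarrow> AC (clo D' ?nx' T') d" for T'
  proof -
    let ?W = "clo D' ?nx' T'"
    have main: "(\<forall>d. x = Arc d \<longrightarrow> AC ?W d) \<and> (\<forall>E. x = Edge E \<longrightarrow> Edge E \<in> ?W)"
      if "x \<in> clo D ?nx S" for x
      using that
    proof (induction rule: clo.induct)
      case (cs c0) then show ?case using s by simp
    next
      case (ce d d')
      have ACd: "AC ?W d" "AC ?W d'" using ce.IH by auto
      have pd: "pre d' \<in> D'" "?nx' (pre d') = d" using pre[OF ce.hyps(3)] ce.hyps(4) by auto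
      have "ed d \<in> ?W"
        using clo.ce[of d D' ?nx' T' "pre d'"] ce.hyps(1) DD' ACd pd preA[OF ACd(2)]
        unfolding AC_def by auto
      then show ?case unfolding ed_def by auto
    next
      case (ca d)
      have ew: "ed d \<in> ?W \<or> ed (?nx d) \<in> ?W" using ca.IH unfolding ed_def by auto
      have "AC ?W d"
      proof (cases "?nx' d \<in> D")
        case True
        have "?nx d = ?nx' d" using N2b[OF DD' D'H _ True] ca.hyps(1) DH by auto
        then have "Arc d \<in> ?W" using clo.ca[of d D'] ew ca.hyps(1) DD' by auto
        then show ?thesis unfolding AC_def using True by simp
      next
        case False then show ?thesis using a ca.hyps(1) ew by blast
      qed
      then show ?case by simp
    qed
    show ?thesis
    proof
      fix d assume "d \<in> D"
      then have "ed d \<in> clo D ?nx S" using Dall by blast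
      then show "ed d \<in> ?W" using main unfolding ed_def by blast
    qed
  qed
  \<comment> \<open>once the ear is coloured, the hypotheses of PC hold\<close>
  have allP: "\<forall>w\<in>P. ed w \<in> clo D' ?nx' T'" if ex: "\<exists>w\<in>P. ed w \<in> clo D' ?nx' T'" for T'
  proof -
    obtain w where w: "w \<in> P" "ed w \<in> clo D' ?nx' T'" using ex by blast
    obtain i where i: "i \<le> t" "ed w = ed (c i)" using EP_ed[OF e] w unfolding P_def by blast
    have "\<forall>j\<le>t. ed (c j) \<in> clo D' ?nx' T'"
      using ear_prop[OF D'H _ e int i(1)] PD' w i unfolding P_def by auto
    then show ?thesis using EP_ed[OF e] unfolding P_def by metis
  qed
  have ArcP: "Arc w \<in> clo D' ?nx' T'" if "\<forall>w\<in>P. ed w \<in> clo D' ?nx' T'" "w \<in> P" for w T'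
    using clo.ca[of w D'] that PD' by blast
  have ACP: "AC (clo D' ?nx' T') d" if ap: "\<forall>w\<in>P. ed w \<in> clo D' ?nx' T'" and d: "d \<in> D"
     and ad: "Arc d \<in> clo D' ?nx' T'" for d T'
  proof -
    have dD': "d \<in> D'" using d DD' by blast
    show ?thesis unfolding AC_def
      using ad ArcP[OF ap] nP inD'[OF dD'] inD'[OF inD'[OF dD']] by auto
  qed
  have ArcD: "Arc d \<in> clo D' ?nx' T'" if ap: "\<forall>w\<in>P. ed w \<in> clo D' ?nx' T'" and d: "d \<in> D"
     and nd: "?nx' d \<notin> D" for d T'
  proof -
    have dD': "d \<in> D'" using d DD' by blast
    have "?nx' d \<in> P" using nP inD'[OF dD'] nd by blast
    then show ?thesis using clo.ca[of d D'] dD' ap by blast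
  qed
  have dstar: "\<exists>d\<in>D. ?nx' d \<notin> D"
  proof (rule ccontr)
    assume na: "\<not> ?thesis"
    have c0D': "c 0 \<in> D'" using c0P PD' by blast
    obtain q1 where q1: "q1 \<in> D'" "?nx' q1 = c 0" using nxt_surj[OF D'H c0D'] by blast
    have c0nD: "c 0 \<notin> D" using c0P PD by blast
    have q1nD: "q1 \<notin> D" using na q1 c0nD by auto
    obtain q2 where q2: "q2 \<in> D'" "?nx' q2 = q1" using nxt_surj[OF D'H q1(1)] by blast
    have q2nD: "q2 \<notin> D" using na q2 q1nD by auto
    have v1: "vert q1 = vert (c 0)" using vnx[OF q1(1)] q1 by simp
    have v2: "vert q2 = vert (c 0)" using vnx[OF q2(1)] q2 v1 by simp
    have n1: "nexp D (c 0) < nexp D q1"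
      using NX[OF DD' D'H wH[OF q1(1)] hx[OF q1(1)]] v1 c0v q1 c0nD by auto
    have n2: "nexp D q1 < nexp D q2"
      using NX[OF DD' D'H wH[OF q2(1)] hx[OF q2(1)]] v2 c0v q2 q1nD by auto
    have "q1 = c 0 \<or> q1 = alpha (c t)" "q2 = c 0 \<or> q2 = alpha (c t)"
      using PT nP q1 q2 q1nD q2nD v1 v2 c0v by auto
    then show False using n1 n2 by auto
  qed
  have Y: "\<exists>T'. S \<subseteq> T' \<and> T' \<subseteq> D' \<and> card T' \<le> card S + 1 \<and> (\<exists>w\<in>P. ed w \<in> clo D' ?nx' T')"
  proof -
    let ?W0 = "clo D' ?nx' S"
    have finS: "finite S" using finite_subset[OF SD finite_subset[OF DH finH]] .
    have SD': "S \<subseteq> D'" using SD DD' by blast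
    have ins: "\<exists>T'. S \<subseteq> T' \<and> T' \<subseteq> D' \<and> card T' \<le> card S + 1 \<and> (\<exists>w\<in>P. ed w \<in> clo D' ?nx' T')"
      if q: "q \<in> D'" "?nx' q \<in> P" "x \<in> D'" "Arc q \<in> clo D' ?nx' (insert x S)"
         "Arc (?nx' q) \<in> clo D' ?nx' (insert x S)" for q x
    proof -
      have "ed (?nx' q) \<in> clo D' ?nx' (insert x S)"
        using clo.ce[OF _ q(5) q(1) refl q(4)] q PD' by blast
      moreover have "card (insert x S) \<le> card S + 1" using finS by (simp add: card_insert_if)
      moreover have "insert x S \<subseteq> D'" using q SD' by blast
      ultimately show ?thesis using q(2) by blast
    qed
    show ?thesis
    proof (cases "\<exists>d\<in>S. ?nx' d \<notin> D")
      case True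
      then obtain d where d: "d \<in> S" "?nx' d \<notin> D" by blast
      have dD': "d \<in> D'" using d SD' by blast
      have P1: "?nx' d \<in> P" using nP inD'[OF dD'] d by blast
      have A1: "Arc d \<in> clo D' ?nx' (insert (?nx' d) S)" by (rule clo.cs) (simp add: d)
      have A2: "Arc (?nx' d) \<in> clo D' ?nx' (insert (?nx' d) S)" by (rule clo.cs) simp
      show ?thesis using ins[OF dD' P1 inD'[OF dD'] A1 A2] .
    next
      case nS: False
      show ?thesis
      proof (cases "\<exists>d\<in>D. ?nx' d \<notin> D \<and> ed d \<in> ?W0")
        case True
        then obtain d where d: "d \<in> D" "?nx' d \<notin> D" "ed d \<in> ?W0" by blast
        have dD': "d \<in> D'" using d DD' by blast
        have "Arc d \<in> ?W0" using clo.ca[of d D'] dD' d by blast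
        then have A: "Arc d \<in> clo D' ?nx' (insert (?nx' d) S)" using clo_mono[of S] by blast
        have P1: "?nx' d \<in> P" using nP inD'[OF dD'] d by blast
        have A2: "Arc (?nx' d) \<in> clo D' ?nx' (insert (?nx' d) S)" by (rule clo.cs) simp
        show ?thesis using ins[OF dD' P1 inD'[OF dD'] A A2] .
      next
        case nE: False
        show ?thesis
        proof (cases "\<exists>d\<in>D. ?nx' d \<notin> D \<and> ed (?nx d) \<in> ?W0")
          case True
          then obtain d where d: "d \<in> D" "?nx' d \<notin> D" "ed (?nx d) \<in> ?W0" by blast
          have dD': "d \<in> D'" using d DD' by blast
          have pr: "pre d \<in> D'" "?nx' (pre d) = ?nx d" using pre[OF d(1)] by auto
          define l where "l = (if ?nx' (?nx' d) \<in> D then ?nx' d else ?nx' (?nx' d))"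
          define q where "q = (if ?nx' (?nx' d) \<in> D then d else ?nx' d)"
          have ql: "?nx' q = l" unfolding q_def l_def by simp
          have lp: "pre d = l" unfolding pre_def l_def using d by simp
          have qD': "q \<in> D'" unfolding q_def using dD' inD' by auto
          have lD': "l \<in> D'" using ql inD'[OF qD'] by simp
          have lnD: "l \<notin> D" unfolding l_def using d by auto
          have lP: "l \<in> P" using nP lD' lnD by blast
          have nl: "?nx' l = ?nx d" using pr lp by simp
          have "Arc l \<in> ?W0" using clo.ca[of l D'] lD' d(3) nl by auto
          then have A: "Arc l \<in> clo D' ?nx' (insert q S)" using clo_mono[of S] by blast
          have A1: "Arc q \<in> clo D' ?nx' (insert q S)" by (rule clo.cs) simp
          show ?thesis using ins[OF qD' _ qD' A1] ql lP A by simp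
        next
          case nF: False
          have s: "\<forall>d\<in>S. AC ?W0 d" unfolding AC_def using nS clo.cs by blast
          have a: "\<forall>d\<in>D. (ed d \<in> ?W0 \<or> ed (?nx d) \<in> ?W0) \<longrightarrow> ?nx' d \<notin> D \<longrightarrow> AC ?W0 d"
            using nE nF by blast
          have "\<forall>d\<in>D. ed d \<in> ?W0" using PC[OF order_refl s a] .
          then show ?thesis using dstar nE by blast
        qed
      qed
    qed
  qed
  then obtain T' where T': "S \<subseteq> T'" "T' \<subseteq> D'" "card T' \<le> card S + 1"
    and w: "\<exists>w\<in>P. ed w \<in> clo D' ?nx' T'" by blast
  let ?W = "clo D' ?nx' T'"
  have ap: "\<forall>w\<in>P. ed w \<in> ?W" using allP[OF w] .
  have s: "\<forall>d\<in>S. AC ?W d" using ACP[OF ap] clo.cs T' SD by blast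
  have a: "\<forall>d\<in>D. (ed d \<in> ?W \<or> ed (?nx d) \<in> ?W) \<longrightarrow> ?nx' d \<notin> D \<longrightarrow> AC ?W d"
    using ACP[OF ap] ArcD[OF ap] by blast
  have De: "\<forall>d\<in>D. ed d \<in> ?W" using PC[OF T'(1) s a] .
  have D'e: "\<forall>d\<in>D'. ed d \<in> ?W" using De ap unfolding D'_def by blast
  have cP: "card P = 2 * (t + 1)" unfolding P_def using EP_card[OF e] .
  have finD: "finite D" using finite_subset[OF DH finH] .
  have finP: "finite P" using finite_subset[OF PH finH] .
  have cD': "card D' = card D + 2 * (t + 1)" unfolding D'_def
    using card_Un_disjoint[OF finD finP] PD cP by (simp add: Int_commute)
  have vD': "vert ` D' \<subseteq> vert ` D \<union> (\<lambda>i. vert (c (Suc i))) ` {..<t}"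
    unfolding D'_def using EP_vert[OF e] unfolding P_def by auto
  have fin2: "finite (vert ` D \<union> (\<lambda>i. vert (c (Suc i))) ` {..<t})" using finD by simp
  have "card (vert ` D') \<le> card (vert ` D \<union> (\<lambda>i. vert (c (Suc i))) ` {..<t})"
    using card_mono[OF fin2 vD'] .
  also have "\<dots> \<le> card (vert ` D) + t" using card_le_plus finD by blast
  finally have cV: "card (vert ` D') \<le> card (vert ` D) + t" .
  have al': "\<forall>d\<in>D'. alpha d \<in> D'" unfolding D'_def P_def using Dal EP_al[OF e] by blast
  have "good D' T'" unfolding good_def
    using D'H Dne DD' al' T'(2) D'e cnt T'(3) cD' cV by auto
  then show ?thesis unfolding D'_def P_def by blast
qed

end

context fgl
begin

lemma walk_ex:
  assumes "(u, v) \<in> R\<^sup>*" "v \<in> T"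
  shows "\<exists>n w. w 0 = u \<and> w n \<in> T \<and> (\<forall>i<n. (w i, w (Suc i)) \<in> R)"
  using assms
proof (induction rule: converse_rtrancl_induct)
  case base
  then show ?case by (intro exI[of _ 0] exI[of _ "\<lambda>_. v"]) simp
next
  case (step y z)
  then obtain n w where w: "w 0 = z" "w n \<in> T" "\<forall>i<n. (w i, w (Suc i)) \<in> R" by blast
  define w' where "w' i = (if i = 0 then y else w (i - 1))" for i
  have "w' 0 = y" "w' (Suc n) \<in> T" unfolding w'_def using w by auto
  moreover have "\<forall>i<Suc n. (w' i, w' (Suc i)) \<in> R"
  proof (intro allI impI)
    fix i assume "i < Suc n"
    then show "(w' i, w' (Suc i)) \<in> R" unfolding w'_def using w step.hyps(1)
      by (cases i) auto
  qed
  ultimately show ?case by blast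
qed

lemma min_walk:
  assumes ex: "\<exists>n w. w 0 = u \<and> w n \<in> T \<and> (\<forall>i<n. (w i, w (Suc i)) \<in> R)"
  shows "\<exists>n w. w 0 = u \<and> w n \<in> T \<and> (\<forall>i<n. (w i, w (Suc i)) \<in> R) \<and>
      (\<forall>i<n. w i \<notin> T) \<and> (\<forall>i j. i < j \<longrightarrow> j \<le> n \<longrightarrow> w i \<noteq> w j)"
proof -
  define WK where "WK n \<longleftrightarrow> (\<exists>w. w 0 = u \<and> w n \<in> T \<and> (\<forall>i<n. (w i, w (Suc i)) \<in> R))" for n
  have "\<exists>n. WK n" using ex unfolding WK_def by blast
  define n0 where "n0 = (LEAST n. WK n)"
  have W0: "WK n0" unfolding n0_def using \<open>\<exists>n. WK n\<close> LeastI_ex by metis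
  have mn: "\<And>m. m < n0 \<Longrightarrow> \<not> WK m" unfolding n0_def using not_less_Least by blast
  obtain w where w: "w 0 = u" "w n0 \<in> T" "\<forall>i<n0. (w i, w (Suc i)) \<in> R" using W0 unfolding WK_def by blast
  have M1: "\<forall>i<n0. w i \<notin> T"
  proof (intro allI impI)
    fix i assume i: "i < n0"
    show "w i \<notin> T"
    proof
      assume "w i \<in> T"
      then have "WK i" unfolding WK_def using w i by (intro exI[of _ w]) auto
      then show False using mn i by blast
    qed
  qed
  have M2: "\<forall>i j. i < j \<longrightarrow> j \<le> n0 \<longrightarrow> w i \<noteq> w j"
  proof (intro allI impI)
    fix i j assume ij: "i < j" "j \<le> n0"
    show "w i \<noteq> w j"
    proof
      assume eq: "w i = w j"
      define w' where "w' k = (if k \<le> i then w k else w (k + (j - i)))" for k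
      define m where "m = n0 - (j - i)"
      have mlt: "m < n0" unfolding m_def using ij by simp
      have "w' 0 = u" unfolding w'_def using w by simp
      moreover have "w' m \<in> T"
      proof (cases "m \<le> i")
        case True
        then have "n0 = j" unfolding m_def using ij by simp
        then have "m = i" unfolding m_def using ij by simp
        then show ?thesis unfolding w'_def using eq w \<open>n0 = j\<close> by simp
      next
        case False
        then have "m + (j - i) = n0" unfolding m_def using ij by simp
        then show ?thesis unfolding w'_def using False w by simp
      qed
      moreover have "\<forall>k<m. (w' k, w' (Suc k)) \<in> R"
      proof (intro allI impI)
        fix k assume k: "k < m"
        show "(w' k, w' (Suc k)) \<in> R"
        proof (cases "k < i")
          case True then show ?thesis unfolding w'_def using w ij k m_def by auto
        next
          case False
          show ?thesis
          proof (cases "k = i")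
            case True
            have "j < n0" using k True m_def ij by simp
            then have "(w j, w (Suc j)) \<in> R" using w by blast
            moreover have "Suc k + (j - i) = Suc j" using True ij by simp
            ultimately show ?thesis unfolding w'_def using True eq by simp
          next
            case F2: False
            then have "i < k" using False by simp
            have "k + (j - i) < n0" using k m_def ij by simp
            then have "(w (k + (j - i)), w (Suc (k + (j - i)))) \<in> R" using w by blast
            then show ?thesis unfolding w'_def using \<open>i < k\<close> by simp
          qed
        qed
      qed
      ultimately have "WK m" unfolding WK_def by blast
      then show False using mn mlt by blast
    qed
  qed
  show ?thesis using w M1 M2 by blast
qed

lemma ear_exists:
  assumes br: "fg_connected V (H - {d0, alpha d0}) vert alpha"
    and D: "D \<subseteq> H" "\<forall>e\<in>D. alpha e \<in> D" "\<forall>e\<in>D. vert e \<in> T"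
    and d0: "d0 \<in> H" "d0 \<notin> D" "vert d0 \<in> T"
  shows "\<exists>c t. is_ear D T c t \<and> c 0 = d0"
proof -
  define R where "R = {(vert d, vert (alpha d)) | d. d \<in> H - {d0, alpha d0}}"
  define z where "z = vert (alpha d0)"
  have zV: "z \<in> V" "vert d0 \<in> V" unfolding z_def using vertV alH d0 by auto
  have "(z, vert d0) \<in> R\<^sup>*" using br zV unfolding fg_connected_def R_def by blast
  then have "\<exists>n w. w 0 = z \<and> w n \<in> T \<and> (\<forall>i<n. (w i, w (Suc i)) \<in> R)"
    using walk_ex[OF _ d0(3)] by blast
  from min_walk[OF this] obtain n w where w: "w 0 = z" "w n \<in> T" "\<forall>i<n. (w i, w (Suc i)) \<in> R"
    and M1: "\<forall>i<n. w i \<notin> T" and M2: "\<forall>i j. i < j \<longrightarrow> j \<le> n \<longrightarrow> w i \<noteq> w j"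
    by blast
  have winj: "i \<le> n \<Longrightarrow> j \<le> n \<Longrightarrow> w i = w j \<Longrightarrow> i = j" for i j
    using M2 by (metis linorder_neqE_nat)
  define e where "e i = (SOME x. x \<in> H - {d0, alpha d0} \<and> vert x = w i \<and> vert (alpha x) = w (Suc i))" for i
  have e: "e i \<in> H - {d0, alpha d0} \<and> vert (e i) = w i \<and> vert (alpha (e i)) = w (Suc i)" if "i < n" for i
  proof -
    have "(w i, w (Suc i)) \<in> R" using w that by blast
    then have "\<exists>x. x \<in> H - {d0, alpha d0} \<and> vert x = w i \<and> vert (alpha x) = w (Suc i)"
      unfolding R_def by (simp only: mem_Collect_eq prod.inject) metis
    then show ?thesis unfolding e_def by (rule someI_ex)
  qed
  define c where "c i = (if i = 0 then d0 else e (i - 1))" for i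
  have al0: "alpha d0 \<notin> D" using D(2) alal d0 by metis
  have ad0: "alpha d0 \<noteq> d0" using alne d0 by blast
  have cS: "c (Suc k) = e k" for k unfolding c_def by simp
  have c0: "c 0 = d0" unfolding c_def by simp
  have vc: "vert (c (Suc i)) = w i" if "i < n" for i using e that cS by simp
  have A: "\<forall>i\<le>n. c i \<in> H \<and> c i \<notin> D \<and> alpha (c i) \<notin> D"
  proof (intro allI impI)
    fix i assume i: "i \<le> n"
    show "c i \<in> H \<and> c i \<notin> D \<and> alpha (c i) \<notin> D"
    proof (cases i)
      case 0 then show ?thesis using d0 al0 c0 by simp
    next
      case (Suc k)
      then have k: "k < n" using i by simp
      have nT: "vert (e k) \<notin> T" using e[OF k] M1 k by simp
      have "e k \<notin> D" using nT D(3) by blast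
      moreover have "alpha (e k) \<notin> D"
      proof
        assume "alpha (e k) \<in> D"
        then have "alpha (alpha (e k)) \<in> D" using D(2) by blast
        then show False using alal[of "e k"] e[OF k] \<open>e k \<notin> D\<close> by simp
      qed
      ultimately show ?thesis using Suc cS e[OF k] by simp
    qed
  qed
  have B: "\<forall>i\<le>n. \<forall>j\<le>n. (c i = c j \<longrightarrow> i = j) \<and> c i \<noteq> alpha (c j)"
  proof (intro allI impI)
    fix i j assume i: "i \<le> n" and j: "j \<le> n"
    have B1: "c i = c j \<longrightarrow> i = j"
    proof
      assume eq: "c i = c j"
      show "i = j"
      proof (cases i)
        case 0
        show ?thesis
        proof (cases j)
          case 0 then show ?thesis using \<open>i = 0\<close> by simp
        next
          case (Suc l)
          then have "l < n" using j by simp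
          then have "e l \<noteq> d0" using e[of l] by blast
          then show ?thesis using eq c0 cS Suc \<open>i = 0\<close> by simp
        qed
      next
        case (Suc k)
        then have k: "k < n" using i by simp
        show ?thesis
        proof (cases j)
          case 0 then show ?thesis using eq c0 cS e k Suc by auto
        next
          case (Suc l)
          then have l: "l < n" using j by simp
          have "w k = w l" using e[OF k] e[OF l] eq Suc \<open>i = Suc k\<close> cS by metis
          then show ?thesis using winj k l Suc \<open>i = Suc k\<close> by simp
        qed
      qed
    qed
    have B2: "c i \<noteq> alpha (c j)"
    proof
      assume eq: "c i = alpha (c j)"
      show False
      proof (cases i)
        case 0
        show False
        proof (cases j)
          case 0 then show False using eq \<open>i = 0\<close> c0 ad0 by simp
        next
          case (Suc l)
          then have l: "l < n" using j by simp
          have "alpha d0 = e l" using eq \<open>i = 0\<close> c0 cS Suc alal d0 e[OF l] by (metis DiffD1)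
          then show False using e[OF l] by auto
        qed
      next
        case (Suc k)
        then have k: "k < n" using i by simp
        show False
        proof (cases j)
          case 0 then show False using eq Suc c0 cS e[OF k] by auto
        next
          case (Suc l)
          then have l: "l < n" using j by simp
          have e1: "e k = alpha (e l)" using eq \<open>i = Suc k\<close> Suc cS by simp
          have e2: "alpha (e k) = e l" using e1 alal e[OF l] by simp
          have "w k = w (Suc l)" using e1 e[OF k] e[OF l] by simp
          then have "k = Suc l" using winj k l by simp
          moreover have "w (Suc k) = w l" using e2 e[OF k] e[OF l] by simp
          then have "Suc k = l" using winj k l by simp
          ultimately show False by simp
        qed
      qed
    qed
    show "(c i = c j \<longrightarrow> i = j) \<and> c i \<noteq> alpha (c j)" using B1 B2 by blast
  qed
  have C1: "vert (c 0) \<in> T" using c0 d0 by simp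
  have C2: "vert (alpha (c n)) \<in> T"
  proof (cases n)
    case 0 then show ?thesis using c0 w z_def by simp
  next
    case (Suc k)
    then show ?thesis using cS e[of k] w by simp
  qed
  have C3: "\<forall>i<n. vert (alpha (c i)) = vert (c (Suc i)) \<and> vert (c (Suc i)) \<notin> T"
  proof (intro allI impI)
    fix i assume i: "i < n"
    have "vert (alpha (c i)) = w i"
    proof (cases i)
      case 0 then show ?thesis using c0 w z_def by simp
    next
      case (Suc k) then show ?thesis using cS e[of k] i by simp
    qed
    then show "vert (alpha (c i)) = vert (c (Suc i)) \<and> vert (c (Suc i)) \<notin> T"
      using vc[OF i] M1 i by simp
  qed
  have C4: "\<forall>i<n. \<forall>j<n. vert (c (Suc i)) = vert (c (Suc j)) \<longrightarrow> i = j"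
    using vc winj by (metis less_imp_le_nat)
  have "is_ear D T c n" unfolding is_ear_def using A B C1 C2 C3 C4 by blast
  then show ?thesis using c0 by blast
qed

lemma grow:
  assumes con: "fg_connected V H vert alpha"
    and D: "D \<subseteq> H" "\<forall>e\<in>D. alpha e \<in> D" "D \<noteq> {}" "D \<noteq> H"
  shows "\<exists>d0\<in>H - D. vert d0 \<in> vert ` D"
proof (rule ccontr)
  assume na: "\<not> ?thesis"
  obtain d1 where d1: "d1 \<in> D" using D by blast
  have u: "vert d1 \<in> V" using d1 D vertV by blast
  have allV: "v \<in> vert ` D" if v: "v \<in> V" for v
  proof -
    have "(vert d1, v) \<in> {(vert d, vert (alpha d)) | d. d \<in> H}\<^sup>*"
      using con u v unfolding fg_connected_def by blast
    then show ?thesis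
    proof (induction rule: rtrancl_induct)
      case base then show ?case using d1 by blast
    next
      case (step y z)
      then obtain d where d: "d \<in> H" "y = vert d" "z = vert (alpha d)" by blast
      have "d \<in> D" using na d step.IH by blast
      then have "alpha d \<in> D" using D by blast
      then show ?case using d by blast
    qed
  qed
  obtain d where "d \<in> H" "d \<notin> D" using D by blast
  then show False using na allV vertV by blast
qed

lemma exists_good:
  assumes con: "fg_connected V H vert alpha"
    and br: "\<forall>d\<in>H. fg_connected V (H - {d, alpha d}) vert alpha"
    and Hne: "H \<noteq> {}"
  shows "\<exists>S. good H S"
proof -
  obtain d0 where d0: "d0 \<in> H" using Hne by blast
  obtain c t where "is_ear {} {vert d0} c t" "c 0 = d0"
    using ear_exists[OF br[rule_format, OF d0], of "{}" "{vert d0}"] d0 by auto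
  then have g0: "good (edarts c t) {c 0, alpha (c t)}" using base_good by blast
  have main: "\<exists>S'. good H S'" if "good D S" for D S
    using that
  proof (induction "card (H - D)" arbitrary: D S rule: less_induct)
    case less
    show ?case
    proof (cases "D = H")
      case True then show ?thesis using less.prems by blast
    next
      case False
      have DH: "D \<subseteq> H" "\<forall>e\<in>D. alpha e \<in> D" "D \<noteq> {}" using less.prems unfolding good_def by auto
      obtain d1 where d1: "d1 \<in> H - D" "vert d1 \<in> vert ` D" using grow[OF con DH False] by blast
      obtain c t where ce: "is_ear D (vert ` D) c t" "c 0 = d1"
        using ear_exists[OF br[rule_format, of d1] DH(1,2)] d1 by blast
      obtain S' where g: "good (D \<union> edarts c t) S'" using ear_step[OF less.prems ce(1)] by blast
      have sub: "D \<union> edarts c t \<subseteq> H" using g unfolding good_def by blast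
      have "d1 \<in> edarts c t" using ce unfolding edarts_def by force
      then have "H - (D \<union> edarts c t) \<subset> H - D" using d1 by blast
      then have "card (H - (D \<union> edarts c t)) < card (H - D)"
        using psubset_card_mono[OF finite_Diff[OF finH]] by blast
      then show ?thesis using less.hyps g by blast
    qed
  qed
  show ?thesis using main g0 by blast
qed

end

context fgl
begin

lemma fge_img: "fg_edges H alpha = (\<lambda>d. {d, alpha d}) ` H"
  unfolding fg_edges_def by auto

lemma card_edges: "card H = 2 * card (fg_edges H alpha)"
proof -
  let ?C = "fg_edges H alpha"
  have fC: "finite ?C" unfolding fge_img using finH by simp
  have U: "\<Union>?C = H" unfolding fge_img using alH by auto
  have c2': "card {c, alpha c} = 2" if "c \<in> H" for c
  proof -
    have "c \<noteq> alpha c" using alne[OF that] by metis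
    then show ?thesis by simp
  qed
  have c2: "\<forall>c\<in>?C. card c = 2" unfolding fge_img using c2' by blast
  have dj: "\<forall>c1\<in>?C. \<forall>c2\<in>?C. c1 \<noteq> c2 \<longrightarrow> c1 \<inter> c2 = {}"
    unfolding fge_img using alal by auto (metis alal)+
  have "2 * card ?C = card (\<Union>?C)"
    by (rule card_partition) (use fC U finH c2 dj in auto)
  then show ?thesis using U by simp
qed

lemma seq:
  assumes SH: "S \<subseteq> H" and FF: "F = clo H sigma S" and fin: "finite F"
  shows "Arc ` S \<subseteq> A \<Longrightarrow> A \<subseteq> F \<Longrightarrow> card F - card A = n \<Longrightarrow>
    \<exists>f. f 0 = A \<and> f n = F \<and> (\<forall>i<n. coloring_move H alpha sigma (f i) (f (Suc i)))"
proof (induction n arbitrary: A)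
  case 0
  then have "A = F" using fin by (meson card_seteq le_diff_iff' diff_is_0_eq)
  then show ?case by (intro exI[of _ "\<lambda>_. F"]) simp
next
  case (Suc n)
  have ex: "\<exists>s. s \<in> F \<and> s \<notin> A \<and> coloring_move H alpha sigma A (insert s A)"
  proof (rule ccontr)
    assume na: "\<not> ?thesis"
    have "x \<in> A" if "x \<in> clo H sigma S" for x
      using that
    proof (induction rule: clo.induct)
      case (cs c) then show ?case using Suc.prems by blast
    next
      case (ce d d')
      show ?case
      proof (rule ccontr)
        assume nA: "ed d \<notin> A"
        have "ed d \<in> F" using FF clo.ce[OF ce.hyps] by simp
        moreover have "coloring_move H alpha sigma A (insert (ed d) A)"
          unfolding coloring_move_def using nA ce ed_def by (intro exI[of _ "ed d"]) auto
        ultimately show False using na nA by blast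
      qed
    next
      case (ca d)
      show ?case
      proof (rule ccontr)
        assume nA: "Arc d \<notin> A"
        have "ed d \<in> clo H sigma S \<or> ed (sigma d) \<in> clo H sigma S" using ca by blast
        then have "Arc d \<in> F" using FF clo.ca[OF ca.hyps(1)] by simp
        moreover have "coloring_move H alpha sigma A (insert (Arc d) A)"
          unfolding coloring_move_def using nA ca ed_def by (intro exI[of _ "Arc d"]) auto
        ultimately show False using na nA by blast
      qed
    qed
    then have "F \<subseteq> A" using FF by blast
    then show False using Suc.prems by auto
  qed
  then obtain s where s: "s \<in> F" "s \<notin> A" "coloring_move H alpha sigma A (insert s A)" by blast
  have finA: "finite A" using finite_subset[OF Suc.prems(2) fin] .
  have "card F - card (insert s A) = n" using Suc.prems(3) s finA by simp
  moreover have "Arc ` S \<subseteq> insert s A" using Suc.prems(1) by blast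
  moreover have "insert s A \<subseteq> F" using Suc.prems(2) s(1) by blast
  ultimately obtain f where f: "f 0 = insert s A" "f n = F" "\<forall>i<n. coloring_move H alpha sigma (f i) (f (Suc i))"
    using Suc.IH[of "insert s A"] by blast
  define g where "g i = (if i = 0 then A else f (i - 1))" for i
  have "g 0 = A" "g (Suc n) = F" unfolding g_def using f by auto
  moreover have "\<forall>i<Suc n. coloring_move H alpha sigma (g i) (g (Suc i))"
  proof (intro allI impI)
    fix i assume "i < Suc n"
    then show "coloring_move H alpha sigma (g i) (g (Suc i))"
      unfolding g_def using f s by (cases i) auto
  qed
  ultimately show ?case by blast
qed

theorem main_bound:
  assumes con: "fg_connected V H vert alpha" and pl: "fg_plane V H alpha sigma"
    and red: "fg_reduced V H vert alpha"
  shows "wirtinger_number V H vert alpha sigma \<le> card (dual_vertices H alpha sigma)"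
proof (cases "H = {}")
  case True
  have Vs: "\<forall>u\<in>V. \<forall>w\<in>V. u = w"
  proof (intro ballI)
    fix u w assume "u \<in> V" "w \<in> V"
    then have "(u, w) \<in> {(vert d, vert (alpha d)) | d. d \<in> H}\<^sup>*" using con unfolding fg_connected_def by blast
    moreover have "{(vert d, vert (alpha d)) | d. d \<in> H} = {}" using True by auto
    ultimately show "u = w" by simp
  qed
  obtain v where v: "V = {v}" using Vs fg unfolding fat_graph_def by blast
  have seg: "segments V H vert alpha = {Circle v}"
    unfolding segments_def fg_edges_def using True v by auto
  have "k_colorable V H vert alpha sigma 1"
    unfolding k_colorable_def Let_def seg fg_edges_def
    by (intro exI[of _ "{Circle v}"] exI[of _ "\<lambda>_. {Circle v}"]) (simp add: True)
  then have "wirtinger_number V H vert alpha sigma \<le> 1"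
    unfolding wirtinger_number_def by (rule Least_le)
  moreover have "card (dual_vertices H alpha sigma) = 1" unfolding dual_vertices_def using True by simp
  ultimately show ?thesis by simp
next
  case Hne: False
  have br: "\<forall>d\<in>H. fg_connected V (H - {d, alpha d}) vert alpha" using red unfolding fg_reduced_def by blast
  obtain S where g: "good H S" using exists_good[OF con br Hne] by blast
  have SH: "S \<subseteq> H" and edH: "\<forall>d\<in>H. ed d \<in> clo H (nxt H) S"
    and cnt: "2 * card S + 2 * card (vert ` H) \<le> card H + 4" using g unfolding good_def by auto
  have eds: "\<forall>d\<in>H. ed d \<in> clo H sigma S" using edH clo_cong1[of H "nxt H" sigma] nxt_HH by blast
  have VH: "V = vert ` H"
  proof
    show "vert ` H \<subseteq> V" using vertV by blast
    show "V \<subseteq> vert ` H"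
    proof
      fix v assume v: "v \<in> V"
      obtain d where d: "d \<in> H" using Hne by blast
      have "(v, vert d) \<in> {(vert d, vert (alpha d)) | d. d \<in> H}\<^sup>*"
        using con v vertV d unfolding fg_connected_def by blast
      then show "v \<in> vert ` H"
      proof (cases rule: converse_rtranclE)
        case base then show ?thesis using d by blast
      next
        case (step y) then show ?thesis by blast
      qed
    qed
  qed
  have seg: "segments V H vert alpha = Edge ` fg_edges H alpha \<union> Arc ` H"
    unfolding segments_def using VH by auto
  let ?F = "segments V H vert alpha"
  have FF: "?F = clo H sigma S"
  proof
    show "?F \<subseteq> clo H sigma S"
    proof
      fix x assume "x \<in> ?F"
      then consider (e) d where "d \<in> H" "x = ed d" | (a) d where "d \<in> H" "x = Arc d"
        unfolding seg fg_edges_def ed_def by blast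
      then show "x \<in> clo H sigma S"
      proof cases
        case e then show ?thesis using eds by blast
      next
        case a then show ?thesis using eds clo.ca[of d H] by blast
      qed
    qed
    show "clo H sigma S \<subseteq> ?F"
    proof
      fix x assume "x \<in> clo H sigma S"
      then show "x \<in> ?F"
        by (induction rule: clo.induct) (use SH in \<open>auto simp: seg ed_def fg_edges_def\<close>)
    qed
  qed
  have finF: "finite ?F" unfolding seg fge_img using finH by simp
  have A0: "Arc ` S \<subseteq> ?F" unfolding seg using SH by blast
  have cA: "card (Arc ` S) = card S" by (rule card_image) (simp add: inj_on_def)
  obtain f where f: "f 0 = Arc ` S" "f (card ?F - card S) = ?F"
    "\<forall>i<card ?F - card S. coloring_move H alpha sigma (f i) (f (Suc i))"
    using seq[OF SH FF finF order_refl A0] cA by metis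
  have "k_colorable V H vert alpha sigma (card S)"
    unfolding k_colorable_def Let_def
    apply (rule exI[of _ "Arc ` S"], rule exI[of _ f])
    using f A0 cA unfolding seg by auto
  then have w: "wirtinger_number V H vert alpha sigma \<le> card S"
    unfolding wirtinger_number_def by (rule Least_le)
  have "int (card V) - int (card (fg_edges H alpha)) + int (card (dual_vertices H alpha sigma)) = 2"
    using pl unfolding fg_plane_def .
  moreover have "card H = 2 * card (fg_edges H alpha)" by (rule card_edges)
  moreover have "card S + card V \<le> card (fg_edges H alpha) + 2" using cnt VH calculation(2) by simp
  then have "int (card S) + int (card V) \<le> int (card (fg_edges H alpha)) + 2" by linarith
  ultimately have "card S \<le> card (dual_vertices H alpha sigma)" by linarith
  then show ?thesis using w by simp
qed

end

theorem lemma4p5: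
  fixes V :: "'v set" and H :: "'d set" and vert :: "'d \<Rightarrow> 'v"
    and alpha sigma :: "'d \<Rightarrow> 'd"
  assumes "fat_graph V H vert alpha sigma"
    and "fg_connected V H vert alpha"
    and "fg_plane V H alpha sigma"
    and "fg_reduced V H vert alpha"
  shows "wirtinger_number V H vert alpha sigma \<le> card (dual_vertices H alpha sigma)"
proof -
  interpret fgl V H vert alpha sigma using assms(1) by unfold_locales
  show ?thesis using main_bound assms(2-4) by blast
qed

end
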